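(* Let $B$ be a Boolean algebra, $W\subset B^n$ a Boolean domain, $A,A'\subset W$ finite subsets and $f:A\to A'$ a bijection. Then $f$ is the restriction of a Boolean isomorphism $W\to W$ if and only if $d(f(x),f(y))=d(x,y)$ for all $x,y\in A$, where $d(x,y)=\bigvee_{i=1}^n(x_i\triangle y_i)$.
   Context: A Boolean function $f:B^n\to B$ is a function given by a polynomial expression in the variables, elements of $B$ and the Boolean operations. A Boolean domain is the zero set in $B^n$ of a Boolean function. A Boolean transformation between Boolean domains $U\subset B^n$, $V\subset B^m$ is a map $U\to V$ given coordinatewise by Boolean functions $B^n\to B$; a Boolean isomorphism is a bijective Boolean transformation. $\triangle$ denotes symmetric difference in $B$. *)

theory Defs
  imports Main
begin

datatype ('n, 'a) bexp =
    BVar 'n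
  | BConst 'a
  | BJoin "('n, 'a) bexp" "('n, 'a) bexp"
  | BMeet "('n, 'a) bexp" "('n, 'a) bexp"
  | BCompl "('n, 'a) bexp"

primrec beval :: "('n \<Rightarrow> 'a::boolean_algebra) \<Rightarrow> ('n, 'a) bexp \<Rightarrow> 'a" where
  "beval x (BVar i) = x i"
| "beval x (BConst c) = c"
| "beval x (BJoin e1 e2) = sup (beval x e1) (beval x e2)"
| "beval x (BMeet e1 e2) = inf (beval x e1) (beval x e2)"
| "beval x (BCompl e) = - beval x e"

definition boolean_function :: "((('n::finite) \<Rightarrow> 'a::boolean_algebra) \<Rightarrow> 'a) \<Rightarrow> bool" where
  "boolean_function g \<longleftrightarrow> (\<exists>e. \<forall>x. g x = beval x e)"

definition boolean_domain :: "(('n::finite) \<Rightarrow> 'a::boolean_algebra) set \<Rightarrow> bool" where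
  "boolean_domain W \<longleftrightarrow> (\<exists>g. boolean_function g \<and> W = {x. g x = bot})"

definition boolean_transformation ::
  "(('n::finite) \<Rightarrow> 'a::boolean_algebra) set \<Rightarrow> (('m::finite) \<Rightarrow> 'a) set
   \<Rightarrow> (('n \<Rightarrow> 'a) \<Rightarrow> ('m \<Rightarrow> 'a)) \<Rightarrow> bool" where
  "boolean_transformation U V F \<longleftrightarrow>
     (\<exists>gs. (\<forall>j. boolean_function (gs j)) \<and> (\<forall>x\<in>U. \<forall>j. F x j = gs j x)) \<and> F ` U \<subseteq> V"

definition boolean_isomorphism ::
  "(('n::finite) \<Rightarrow> 'a::boolean_algebra) set \<Rightarrow> (('m::finite) \<Rightarrow> 'a) set
   \<Rightarrow> (('n \<Rightarrow> 'a) \<Rightarrow> ('m \<Rightarrow> 'a)) \<Rightarrow> bool" where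
  "boolean_isomorphism U V F \<longleftrightarrow> boolean_transformation U V F \<and> bij_betw F U V"

definition symdiff :: "'a::boolean_algebra \<Rightarrow> 'a \<Rightarrow> 'a" where
  "symdiff a b = sup (inf a (- b)) (inf (- a) b)"

definition bdist :: "(('n::finite) \<Rightarrow> 'a::boolean_algebra) \<Rightarrow> ('n \<Rightarrow> 'a) \<Rightarrow> 'a" where
  "bdist x y = Sup_fin (range (\<lambda>i. symdiff (x i) (y i)))"

end

theory Submission
  imports Defs
begin


lemma ba_le_iff: "(x::'a::boolean_algebra) \<le> y \<longleftrightarrow> inf x (- y) = bot"
  using inf_shunt[of x "- y"] by simp

lemma ba_eq_via: "inf (a::'a::boolean_algebra) c = inf b c \<Longrightarrow> inf a (- c) = inf b (- c) \<Longrightarrow> a = b"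
proof -
  have s: "z = sup (inf z c) (inf z (-c))" for z :: 'a
    by (simp add: inf_sup_distrib1[symmetric])
  assume "inf a c = inf b c" "inf a (- c) = inf b (- c)"
  then show "a = b" using s[of a] s[of b] by simp
qed

lemma symdiff_inf_bot: "inf (symdiff (a::'a::boolean_algebra) b) c = bot \<longleftrightarrow> inf a c = inf b c"
proof -
  have e1: "inf (inf a (-b)) c = inf (inf a c) (-b)" by (simp add: inf_assoc inf_commute inf_left_commute)
  have e2: "inf (inf (-a) b) c = inf (inf b c) (-a)" by (simp add: inf_assoc inf_commute inf_left_commute)
  have "inf (symdiff a b) c = bot \<longleftrightarrow> inf (inf a c) (-b) = bot \<and> inf (inf b c) (-a) = bot"
    unfolding symdiff_def inf_sup_distrib2 sup_eq_bot_iff e1 e2 ..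
  also have "\<dots> \<longleftrightarrow> inf a c \<le> b \<and> inf b c \<le> a" by (simp only: ba_le_iff)
  also have "\<dots> \<longleftrightarrow> inf a c = inf b c"
  proof
    assume h: "inf a c \<le> b \<and> inf b c \<le> a"
    then have "inf a c \<le> inf b c" "inf b c \<le> inf a c" by (auto intro: le_infI)
    then show "inf a c = inf b c" by (rule antisym)
  next
    assume "inf a c = inf b c"
    then have "inf a c \<le> inf b c" "inf b c \<le> inf a c" by simp_all
    then show "inf a c \<le> b \<and> inf b c \<le> a" by (auto dest: le_infE)
  qed
  finally show ?thesis .
qed

lemma symdiff_bot: "symdiff (a::'a::boolean_algebra) b = bot \<Longrightarrow> a = b"
  using symdiff_inf_bot[of a b top] by simp

lemma Sup_fin_inf_bot:
  assumes "finite S" "S \<noteq> {}"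
  shows "inf (Sup_fin S) (c::'a::boolean_algebra) = bot \<longleftrightarrow> (\<forall>s\<in>S. inf s c = bot)"
  using assms
proof (induction S rule: finite_ne_induct)
  case (singleton x) then show ?case by simp
next
  case (insert x F) then show ?case by (simp add: inf_sup_distrib2)
qed

lemma bdist_inf_bot:
  "inf (bdist x y) (c::'a::boolean_algebra) = bot \<longleftrightarrow> (\<forall>i. inf (x i) c = inf (y i) c)"
  unfolding bdist_def by (subst Sup_fin_inf_bot) (auto simp: symdiff_inf_bot)

lemma inf_inf_distr: "inf (inf u v) (c::'a::boolean_algebra) = inf (inf u c) (inf v c)"
  by (simp add: inf_assoc inf_left_commute inf_commute)

lemma inf_compl_loc: "inf (- u) (c::'a::boolean_algebra) = inf (- inf u c) c"
  by (simp add: inf_sup_distrib2)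

lemma beval_local:
  "(\<And>i. inf (x i) c = inf (y i) c) \<Longrightarrow> inf (beval x e) (c::'a::boolean_algebra) = inf (beval y e) c"
proof (induction e)
  case (BJoin e1 e2) then show ?case by (simp only: beval.simps inf_sup_distrib2)
next
  case (BMeet e1 e2)
  have "inf (beval x (BMeet e1 e2)) c = inf (inf (beval x e1) c) (inf (beval x e2) c)"
    using inf_inf_distr[of "beval x e1" "beval x e2" c] by simp
  also have "\<dots> = inf (inf (beval y e1) c) (inf (beval y e2) c)" using BMeet by simp
  also have "\<dots> = inf (beval y (BMeet e1 e2)) c"
    using inf_inf_distr[of "beval y e1" "beval y e2" c] by simp
  finally show ?case .
next
  case (BCompl e)
  have "inf (beval x (BCompl e)) c = inf (- inf (beval x e) c) c" by (simp only: beval.simps inf_compl_loc[of "beval x e"])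
  also have "\<dots> = inf (- inf (beval y e) c) c" using BCompl by simp
  also have "\<dots> = inf (beval y (BCompl e)) c" by (simp only: beval.simps inf_compl_loc[of "beval y e", symmetric])
  finally show ?case .
next
  case (BVar i) then show ?case by simp
next
  case (BConst a) then show ?case by simp
qed

lemma bf_local:
  "boolean_function g \<Longrightarrow> (\<And>i. inf (x i) c = inf (y i) c) \<Longrightarrow> inf (g x) c = inf (g y) c"
proof -
  assume "boolean_function g" and h: "\<And>i. inf (x i) c = inf (y i) c"
  then obtain e where "\<forall>x. g x = beval x e" unfolding boolean_function_def by blast
  then show ?thesis using beval_local[of x c y e, OF h] by simp
qed

lemma bf_var: "boolean_function (\<lambda>x. x i)"
  unfolding boolean_function_def by (rule exI[of _ "BVar i"]) simp
lemma bf_const: "boolean_function (\<lambda>x. c)"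
  unfolding boolean_function_def by (rule exI[of _ "BConst c"]) simp
lemma bf_sup: "boolean_function f \<Longrightarrow> boolean_function g \<Longrightarrow> boolean_function (\<lambda>x. sup (f x) (g x))"
  unfolding boolean_function_def by (metis beval.simps(3))
lemma bf_inf: "boolean_function f \<Longrightarrow> boolean_function g \<Longrightarrow> boolean_function (\<lambda>x. inf (f x) (g x))"
  unfolding boolean_function_def by (metis beval.simps(4))
lemma bf_compl: "boolean_function f \<Longrightarrow> boolean_function (\<lambda>x. - f x)"
  unfolding boolean_function_def by (metis beval.simps(5))

primrec bigsup :: "'b list \<Rightarrow> ('b \<Rightarrow> 'a::boolean_algebra) \<Rightarrow> 'a" where
  "bigsup [] h = bot" | "bigsup (x#xs) h = sup (h x) (bigsup xs h)"
primrec biginf :: "'b list \<Rightarrow> ('b \<Rightarrow> 'a::boolean_algebra) \<Rightarrow> 'a" where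
  "biginf [] h = top" | "biginf (x#xs) h = inf (h x) (biginf xs h)"

lemma bf_bigsup: "(\<And>y. y \<in> set xs \<Longrightarrow> boolean_function (h y)) \<Longrightarrow> boolean_function (\<lambda>z. bigsup xs (\<lambda>y. h y z))"
  by (induction xs) (auto intro: bf_sup bf_const)
lemma bf_biginf: "(\<And>y. y \<in> set xs \<Longrightarrow> boolean_function (h y)) \<Longrightarrow> boolean_function (\<lambda>z. biginf xs (\<lambda>y. h y z))"
  by (induction xs) (auto intro: bf_inf bf_const)

lemma bigsup_zero: "(\<And>x. x \<in> set xs \<Longrightarrow> inf (h x) q = bot) \<Longrightarrow> inf (bigsup xs h) q = bot"
  by (induction xs) (auto simp: inf_sup_distrib2)

lemma bigsup_single: "x0 \<in> set xs \<Longrightarrow> (\<And>x. x \<in> set xs \<Longrightarrow> x \<noteq> x0 \<Longrightarrow> inf (h x) q = bot)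
   \<Longrightarrow> inf (bigsup xs h) q = inf (h x0) q"
proof (induction xs)
  case (Cons a xs)
  show ?case
  proof (cases "x0 \<in> set xs")
    case True
    have IH: "inf (bigsup xs h) q = inf (h x0) q" using Cons True by auto
    show ?thesis
    proof (cases "a = x0")
      case True then show ?thesis by (simp add: inf_sup_distrib2 IH)
    next
      case False
      then have "inf (h a) q = bot" using Cons.prems by auto
      then show ?thesis by (simp add: inf_sup_distrib2 IH)
    qed
  next
    case False
    then have "a = x0" using Cons by auto
    moreover have "inf (bigsup xs h) q = bot" using Cons False by (auto intro: bigsup_zero)
    ultimately show ?thesis by (simp add: inf_sup_distrib2)
  qed
qed simp

lemma biginf_le: "x \<in> set xs \<Longrightarrow> biginf xs h \<le> h x"
  by (induction xs) (auto intro: le_infI2)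

lemma biginf_cong: "(\<And>x. x \<in> set xs \<Longrightarrow> h x = h' x) \<Longrightarrow> biginf xs h = biginf xs h'"
  by (induction xs) auto


definition cv :: "('n \<Rightarrow> bool) \<Rightarrow> 'n \<Rightarrow> 'a::boolean_algebra" where
  "cv \<alpha> = (\<lambda>i. if \<alpha> i then top else bot)"
definition lit :: "bool \<Rightarrow> 'a \<Rightarrow> 'a::boolean_algebra" where
  "lit b u = (if b then u else - u)"
definition nlist :: "'n::finite list" where
  "nlist = (SOME xs. set xs = UNIV \<and> distinct xs)"
definition mt :: "('n::finite \<Rightarrow> 'a::boolean_algebra) \<Rightarrow> ('n \<Rightarrow> bool) \<Rightarrow> 'a" where
  "mt z \<alpha> = biginf nlist (\<lambda>i. lit (\<alpha> i) (z i))"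

lemma nlist: "set (nlist::'n::finite list) = UNIV" "distinct (nlist::'n::finite list)"
proof -
  have "\<exists>xs. set xs = (UNIV::'n set) \<and> distinct xs" by (rule finite_distinct_list) simp
  then have "set (nlist::'n list) = UNIV \<and> distinct (nlist::'n list)"
    unfolding nlist_def by (rule someI_ex)
  then show "set (nlist::'n::finite list) = UNIV" "distinct (nlist::'n::finite list)" by auto
qed

lemma mt_le: "mt z \<alpha> \<le> lit (\<alpha> i) (z i)"
  unfolding mt_def by (rule biginf_le) (simp add: nlist)

lemma mt_disj: "\<alpha> \<noteq> \<beta> \<Longrightarrow> inf (mt z \<alpha>) (mt z \<beta>) = bot"
proof -
  assume "\<alpha> \<noteq> \<beta>"
  then obtain i where i: "\<alpha> i \<noteq> \<beta> i" by auto
  have "inf (mt z \<alpha>) (mt z \<beta>) \<le> inf (lit (\<alpha> i) (z i)) (lit (\<beta> i) (z i))"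
    using mt_le by (rule inf_mono) (rule mt_le)
  also have "\<dots> = bot" using i unfolding lit_def by (cases "\<alpha> i") auto
  finally show ?thesis by (simp add: bot_unique)
qed

lemma mt_pattern: "inf (z i) (mt z \<alpha>) = inf (cv \<alpha> i) (mt z \<alpha>)"
proof (cases "\<alpha> i")
  case True
  then have "mt z \<alpha> \<le> z i" using mt_le[of z \<alpha> i] by (simp add: lit_def)
  then show ?thesis using True by (simp add: cv_def inf.absorb2)
next
  case False
  then have "mt z \<alpha> \<le> - z i" using mt_le[of z \<alpha> i] by (simp add: lit_def)
  then have "inf (z i) (mt z \<alpha>) = bot"
    by (metis inf.absorb_iff2 inf_compl_bot_left2 inf_commute)
  then show ?thesis using False by (simp add: cv_def)
qed

lemma mtl_cover:
  "distinct is \<Longrightarrow> (\<And>\<alpha>. inf x (biginf is (\<lambda>i. lit (\<alpha> i) (z i))) = (bot::'a::boolean_algebra)) \<Longrightarrow> x = bot"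
proof (induction "is")
  case Nil then show ?case by simp
next
  case (Cons i "is")
  show ?case
  proof (rule Cons.IH)
    show "distinct is" using Cons by simp
    fix \<alpha> :: "'b \<Rightarrow> bool"
    let ?T = "biginf is (\<lambda>j. lit (\<alpha> j) (z j))"
    have ni: "i \<notin> set is" using Cons by simp
    have T1: "biginf is (\<lambda>j. lit ((\<alpha>(i:=True)) j) (z j)) = ?T"
      by (rule biginf_cong) (use ni in auto)
    have T2: "biginf is (\<lambda>j. lit ((\<alpha>(i:=False)) j) (z j)) = ?T"
      by (rule biginf_cong) (use ni in auto)
    have h1: "inf x (inf (z i) ?T) = bot"
      using Cons.prems(2)[of "\<alpha>(i:=True)"] T1 by (simp add: lit_def)
    have h2: "inf x (inf (- z i) ?T) = bot"
      using Cons.prems(2)[of "\<alpha>(i:=False)"] T2 by (simp add: lit_def)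
    have a1: "inf (inf x ?T) (z i) = inf bot (z i)" using h1 by (simp add: inf_assoc inf_left_commute inf_commute)
    have a2: "inf (inf x ?T) (- z i) = inf bot (- z i)" using h2 by (simp add: inf_assoc inf_left_commute inf_commute)
    show "inf x ?T = bot" using ba_eq_via[OF a1 a2] .
  qed
qed

lemma mt_cover: "(\<And>\<alpha>. inf x (mt z \<alpha>) = bot) \<Longrightarrow> x = bot"
  unfolding mt_def by (rule mtl_cover[OF nlist(2)])

lemma bf_lit: "boolean_function (\<lambda>z. lit b (z i))"
  unfolding lit_def by (cases b) (auto intro: bf_var bf_compl)

lemma bf_mt: "boolean_function (\<lambda>z. mt z \<alpha>)"
  unfolding mt_def by (rule bf_biginf) (rule bf_lit)

lemma mt_cv: "mt (cv \<beta>) \<beta> = (top::'a::boolean_algebra)"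
proof -
  have "lit (\<beta> i) (cv \<beta> i) = (top::'a)" for i by (simp add: lit_def cv_def)
  moreover have "biginf xs (\<lambda>i. (top::'a)) = top" for xs :: "'b list" by (induction xs) auto
  ultimately show ?thesis unfolding mt_def by simp
qed

lemma mt_local_top: "(\<And>i. inf (z i) q = inf (cv \<beta> i) q) \<Longrightarrow> inf (mt z \<beta>) q = q"
  using bf_local[OF bf_mt, of z q "cv \<beta>" \<beta>] by (simp add: mt_cv)

primrec pieces :: "'a::boolean_algebra list \<Rightarrow> 'a set" where
  "pieces [] = {top}"
| "pieces (c#cs) = (\<lambda>p. inf p c) ` pieces cs \<union> (\<lambda>p. inf p (-c)) ` pieces cs"

lemma pieces_finite: "finite (pieces cs)"
  by (induction cs) auto

lemma inf_bot_mono: "inf a b = bot \<Longrightarrow> inf (inf a u) (inf b v) = (bot::'a::boolean_algebra)"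
proof -
  assume h: "inf a b = bot"
  have "inf (inf a u) (inf b v) \<le> inf a b" by (auto intro: le_infI1 le_infI2)
  then show ?thesis using h by (simp add: bot_unique)
qed

lemma inf_compl_cross: "inf (inf p c) (inf q (-c)) = (bot::'a::boolean_algebra)"
proof -
  have "inf (inf p c) (inf q (-c)) \<le> inf c (-c)" by (auto intro: le_infI1 le_infI2)
  then show ?thesis by (simp add: bot_unique)
qed

lemma pieces_disj: "p \<in> pieces cs \<Longrightarrow> q \<in> pieces cs \<Longrightarrow> p \<noteq> q \<Longrightarrow> inf p q = bot"
proof (induction cs arbitrary: p q)
  case Nil then show ?case by simp
next
  case (Cons c cs)
  from Cons.prems(1) obtain p1 where p1: "p1 \<in> pieces cs" "p = inf p1 c \<or> p = inf p1 (-c)" by auto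
  from Cons.prems(2) obtain q1 where q1: "q1 \<in> pieces cs" "q = inf q1 c \<or> q = inf q1 (-c)" by auto
  show ?case
  proof (cases "p1 = q1")
    case True
    then show ?thesis using p1 q1 Cons.prems(3) inf_compl_cross[of p1 c q1] inf_compl_cross[of q1 c p1]
      by (auto simp: inf_commute)
  next
    case False
    then have "inf p1 q1 = bot" using Cons.IH p1 q1 by blast
    then show ?thesis using p1 q1 inf_bot_mono by auto
  qed
qed

lemma pieces_cover: "(\<And>p. p \<in> pieces cs \<Longrightarrow> inf x p = bot) \<Longrightarrow> x = bot"
proof (induction cs)
  case Nil then show ?case by simp
next
  case (Cons c cs)
  show ?case
  proof (rule Cons.IH)
    fix p assume p: "p \<in> pieces cs"
    have h1: "inf x (inf p c) = bot" using Cons.prems p by auto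
    have h2: "inf x (inf p (-c)) = bot" using Cons.prems p by auto
    have a1: "inf (inf x p) c = inf bot c" using h1 by (simp add: inf_assoc)
    have a2: "inf (inf x p) (-c) = inf bot (-c)" using h2 by (simp add: inf_assoc)
    show "inf x p = bot" using ba_eq_via[OF a1 a2] .
  qed
qed

lemma pieces_atom: "c \<in> set cs \<Longrightarrow> p \<in> pieces cs \<Longrightarrow> inf p c = p \<or> inf p c = bot"
proof (induction cs arbitrary: p)
  case Nil then show ?case by simp
next
  case (Cons c0 cs)
  from Cons.prems(2) obtain p1 where p1: "p1 \<in> pieces cs" "p = inf p1 c0 \<or> p = inf p1 (-c0)" by auto
  show ?case
  proof (cases "c = c0")
    case True
    then show ?thesis using p1 by (auto simp: inf_assoc)
  next
    case False
    then have "c \<in> set cs" using Cons.prems by simp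
    then have "inf p1 c = p1 \<or> inf p1 c = bot" using Cons.IH p1 by blast
    moreover have "inf (inf p1 d) c = inf (inf p1 c) d" for d by (simp add: inf_assoc inf_commute inf_left_commute)
    ultimately show ?thesis using p1 by auto
  qed
qed

definition pat :: "'a::boolean_algebra \<Rightarrow> ('n \<Rightarrow> 'a) \<Rightarrow> 'n \<Rightarrow> bool" where
  "pat p x = (\<lambda>i. inf (x i) p \<noteq> bot)"

lemma piece_pat:
  assumes "\<And>i. x i \<in> set cs" "p \<in> pieces cs"
  shows "inf (x i) p = inf (cv (pat p x) i) p"
proof -
  have "inf p (x i) = p \<or> inf p (x i) = bot" using pieces_atom assms by blast
  then show ?thesis unfolding pat_def cv_def by (auto simp: inf_commute)
qed

lemma pat_eq_iff:
  assumes "\<And>i. x i \<in> set cs" "\<And>i. y i \<in> set cs" "p \<in> pieces cs"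
  shows "pat p x = pat p y \<longleftrightarrow> (\<forall>i. inf (x i) p = inf (y i) p)"
proof
  assume "pat p x = pat p y"
  assume e: "pat p x = pat p y"
  show "\<forall>i. inf (x i) p = inf (y i) p"
  proof
    fix i
    have "inf (x i) p = inf (cv (pat p x) i) p" by (rule piece_pat) (use assms in auto)
    moreover have "inf (y i) p = inf (cv (pat p y) i) p" by (rule piece_pat) (use assms in auto)
    ultimately show "inf (x i) p = inf (y i) p" using e by simp
  qed
next
  assume "\<forall>i. inf (x i) p = inf (y i) p"
  then show "pat p x = pat p y" unfolding pat_def by auto
qed

lemma extend_perm:
  fixes a b :: "'x \<Rightarrow> 'y"
  assumes "finite D" "\<And>x. x \<in> A \<Longrightarrow> a x \<in> D" "\<And>x. x \<in> A \<Longrightarrow> b x \<in> D"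
    and "\<And>x y. x \<in> A \<Longrightarrow> y \<in> A \<Longrightarrow> a x = a y \<longleftrightarrow> b x = b y"
  shows "\<exists>\<tau>. bij \<tau> \<and> (\<forall>\<alpha>. \<tau> \<alpha> \<in> D \<longleftrightarrow> \<alpha> \<in> D) \<and> (\<forall>x\<in>A. \<tau> (a x) = b x)"
proof -
  define S where "S = a ` A"
  define S' where "S' = b ` A"
  define h where "h \<sigma> = b (SOME x. x \<in> A \<and> a x = \<sigma>)" for \<sigma>
  have hx: "h (a x) = b x" if "x \<in> A" for x
  proof -
    have "\<exists>y. y \<in> A \<and> a y = a x" using that by blast
    then have "(SOME y. y \<in> A \<and> a y = a x) \<in> A \<and> a (SOME y. y \<in> A \<and> a y = a x) = a x" by (rule someI_ex)
    then show ?thesis unfolding h_def using assms(4) that by blast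
  qed
  have hbij: "bij_betw h S S'"
    unfolding bij_betw_def inj_on_def S_def S'_def
  proof (intro conjI ballI impI)
    fix s t assume "s \<in> a ` A" "t \<in> a ` A" "h s = h t"
    then show "s = t" using hx assms(4) by auto
  next
    show "h ` a ` A = b ` A" using hx by (auto simp: image_image)
  qed
  have SD: "S \<subseteq> D" "S' \<subseteq> D" using assms(2,3) S_def S'_def by auto
  have fin: "finite S" "finite S'" using SD assms(1) finite_subset by auto
  have "card S = card S'" using bij_betw_same_card[OF hbij] .
  then have "card (D - S) = card (D - S')" using SD fin assms(1) by (simp add: card_Diff_subset)
  then obtain k where k: "bij_betw k (D - S) (D - S')"
    using finite_same_card_bij assms(1) by (meson finite_Diff)
  define \<tau> where "\<tau> \<alpha> = (if \<alpha> \<in> S then h \<alpha> else if \<alpha> \<in> D then k \<alpha> else \<alpha>)" for \<alpha>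
  have b1: "bij_betw \<tau> S S'" using hbij by (rule bij_betw_cong[THEN iffD1, rotated]) (simp add: \<tau>_def)
  have b2: "bij_betw \<tau> (D - S) (D - S')" using k by (rule bij_betw_cong[THEN iffD1, rotated]) (simp add: \<tau>_def)
  have b3: "bij_betw \<tau> (- D) (- D)" by (rule bij_betw_cong[THEN iffD1, rotated, OF bij_betw_id]) (use SD in \<open>auto simp: \<tau>_def\<close>)
  have "bij_betw \<tau> (S \<union> (D - S) \<union> - D) (S' \<union> (D - S') \<union> - D)"
    by (rule bij_betw_combine[OF bij_betw_combine[OF b1 b2]]) (use b3 SD in auto)
  moreover have "S \<union> (D - S) \<union> - D = UNIV" "S' \<union> (D - S') \<union> - D = UNIV" by auto
  ultimately have "bij \<tau>" by simp
  moreover have "\<tau> \<alpha> \<in> D \<longleftrightarrow> \<alpha> \<in> D" for \<alpha>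
  proof (cases "\<alpha> \<in> S")
    case True then show ?thesis using b1 SD by (auto simp: bij_betw_def)
  next
    case False then show ?thesis using k by (auto simp: \<tau>_def bij_betw_def)
  qed
  moreover have "\<forall>x\<in>A. \<tau> (a x) = b x" using hx by (auto simp: \<tau>_def S_def)
  ultimately show ?thesis by blast
qed


definition alist :: "('n::finite \<Rightarrow> bool) list" where
  "alist = (SOME xs. set xs = UNIV)"

lemma alist: "set (alist::('n::finite \<Rightarrow> bool) list) = UNIV"
proof -
  have "\<exists>xs. set xs = (UNIV::('n \<Rightarrow> bool) set)" by (rule finite_list) simp
  then show ?thesis unfolding alist_def by (rule someI_ex)
qed

definition Fmap :: "'a::boolean_algebra list \<Rightarrow> ('a \<Rightarrow> ('n::finite \<Rightarrow> bool) \<Rightarrow> ('n \<Rightarrow> bool))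
    \<Rightarrow> ('n \<Rightarrow> 'a) \<Rightarrow> ('n \<Rightarrow> 'a)" where
  "Fmap ps \<sigma> z = (\<lambda>j. bigsup ps (\<lambda>p. bigsup alist (\<lambda>\<alpha>. inf (inf p (mt z \<alpha>)) (cv (\<sigma> p \<alpha>) j))))"

lemma bf_Fmap: "boolean_function (\<lambda>z. Fmap ps \<sigma> z j)"
  unfolding Fmap_def
  by (intro bf_bigsup bf_inf bf_const bf_mt)

lemma inf_bot_le: "u \<le> a \<Longrightarrow> v \<le> b \<Longrightarrow> inf a b = bot \<Longrightarrow> inf u v = (bot::'a::boolean_algebra)"
proof -
  assume "u \<le> a" "v \<le> b" "inf a b = bot"
  then have "inf u v \<le> bot" by (metis inf_mono)
  then show ?thesis by (simp add: bot_unique)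
qed

lemma Fmap_K:
  assumes p: "p \<in> set ps" and disj: "\<And>p q. p \<in> set ps \<Longrightarrow> q \<in> set ps \<Longrightarrow> p \<noteq> q \<Longrightarrow> inf p q = bot"
  shows "inf (Fmap ps \<sigma> z j) (inf p (mt z \<alpha>)) = inf (cv (\<sigma> p \<alpha>) j) (inf p (mt z \<alpha>))"
proof -
  let ?Q = "inf p (mt z \<alpha>)"
  have "inf (Fmap ps \<sigma> z j) ?Q = inf (bigsup alist (\<lambda>\<beta>. inf (inf p (mt z \<beta>)) (cv (\<sigma> p \<beta>) j))) ?Q"
    unfolding Fmap_def
  proof (rule bigsup_single[OF p])
    fix p' assume "p' \<in> set ps" "p' \<noteq> p"
    then have pp: "inf p' p = bot" using disj p by blast
    show "inf (bigsup alist (\<lambda>\<beta>. inf (inf p' (mt z \<beta>)) (cv (\<sigma> p' \<beta>) j))) ?Q = bot"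
    proof (rule bigsup_zero)
      fix \<beta>
      show "inf (inf (inf p' (mt z \<beta>)) (cv (\<sigma> p' \<beta>) j)) ?Q = bot"
        by (rule inf_bot_le[OF _ _ pp]) (auto intro: le_infI1)
    qed
  qed
  also have "\<dots> = inf (inf ?Q (cv (\<sigma> p \<alpha>) j)) ?Q"
  proof (rule bigsup_single)
    show "\<alpha> \<in> set alist" by (simp add: alist)
    fix \<beta> assume "\<beta> \<noteq> \<alpha>"
    then have "inf (mt z \<beta>) (mt z \<alpha>) = bot" by (rule mt_disj)
    then show "inf (inf (inf p (mt z \<beta>)) (cv (\<sigma> p \<beta>) j)) ?Q = bot"
      by (rule inf_bot_le[rotated 2]) (auto intro: le_infI1 le_infI2)
  qed
  also have "\<dots> = inf (cv (\<sigma> p \<alpha>) j) ?Q" by (simp add: inf_commute inf_left_commute)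
  finally show ?thesis .
qed

lemma Fmap_K':
  assumes p: "p \<in> set ps" and disj: "\<And>p q. p \<in> set ps \<Longrightarrow> q \<in> set ps \<Longrightarrow> p \<noteq> q \<Longrightarrow> inf p q = bot"
    and q: "inf q (inf p (mt z \<beta>)) = q"
  shows "inf (Fmap ps \<sigma> z j) q = inf (cv (\<sigma> p \<beta>) j) q"
proof -
  have "inf (Fmap ps \<sigma> z j) q = inf (inf (Fmap ps \<sigma> z j) (inf p (mt z \<beta>))) q"
    using q by (metis inf_assoc inf_commute)
  also have "\<dots> = inf (inf (cv (\<sigma> p \<beta>) j) (inf p (mt z \<beta>))) q" using Fmap_K[OF p disj, of \<sigma> z j \<beta>] by simp
  also have "\<dots> = inf (cv (\<sigma> p \<beta>) j) q" using q by (metis inf_assoc inf_commute)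
  finally show ?thesis .
qed

lemma mt_pattern2: "inf (z i) (inf p (mt z \<alpha>)) = inf (cv \<alpha> i) (inf p (mt z \<alpha>))"
  using mt_pattern[of z i \<alpha>] by (metis inf_left_commute)

lemma inf_p_ext: "inf u p = inf v p \<Longrightarrow> inf u (inf p m) = inf v (inf p (m::'a::boolean_algebra))"
  by (simp add: inf_assoc[symmetric])

lemma cover_eq:
  assumes "\<And>p \<alpha>. p \<in> pieces cs \<Longrightarrow> inf u (inf p (mt z \<alpha>)) = inf v (inf p (mt z \<alpha>))"
  shows "u = (v::'a::boolean_algebra)"
proof -
  have "symdiff u v = bot"
  proof (rule pieces_cover)
    fix p assume p: "p \<in> pieces cs"
    show "inf (symdiff u v) p = bot"
    proof (rule mt_cover)
      fix \<alpha>
      have "inf (symdiff u v) (inf p (mt z \<alpha>)) = bot"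
        using assms[OF p] by (simp add: symdiff_inf_bot)
      then show "inf (inf (symdiff u v) p) (mt z \<alpha>) = bot" by (simp add: inf_assoc)
    qed
  qed
  then show ?thesis by (rule symdiff_bot)
qed

lemma Fmap_W:
  assumes bfg: "boolean_function g" and ps: "set ps = pieces cs"
    and gen: "\<And>\<alpha>. g (cv \<alpha>) \<in> set cs"
    and pres: "\<And>p \<alpha>. p \<in> pieces cs \<Longrightarrow> inf (g (cv \<alpha>)) p = bot \<Longrightarrow> inf (g (cv (\<sigma> p \<alpha>))) p = bot"
    and gz: "g z = bot"
  shows "g (Fmap ps \<sigma> z) = bot"
proof (rule cover_eq[where cs = cs and z = z])
  fix p \<alpha> assume p: "p \<in> pieces cs"
  let ?Q = "inf p (mt z \<alpha>)"
  have disj: "\<And>p q. p \<in> set ps \<Longrightarrow> q \<in> set ps \<Longrightarrow> p \<noteq> q \<Longrightarrow> inf p q = bot"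
    using pieces_disj ps by blast
  have "inf (g (Fmap ps \<sigma> z)) ?Q = inf (g (cv (\<sigma> p \<alpha>))) ?Q"
    by (rule bf_local[OF bfg]) (rule Fmap_K, use p ps disj in auto)
  also have "\<dots> = bot"
  proof (cases "inf (g (cv \<alpha>)) p = bot")
    case True
    then have "inf (g (cv (\<sigma> p \<alpha>))) p = bot" using pres p by blast
    then show ?thesis by (simp add: inf_assoc[symmetric])
  next
    case False
    then have pa: "inf p (g (cv \<alpha>)) = p" using pieces_atom[OF gen p] by (auto simp: inf_commute)
    have "inf (g z) ?Q = inf (g (cv \<alpha>)) ?Q"
      by (rule bf_local[OF bfg]) (rule mt_pattern2)
    then have "inf (g (cv \<alpha>)) ?Q = bot" using gz by simp
    moreover have "inf (g (cv \<alpha>)) ?Q = ?Q" using pa by (metis inf_assoc inf_commute)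
    ultimately have "?Q = bot" by simp
    then show ?thesis by simp
  qed
  finally show "inf (g (Fmap ps \<sigma> z)) ?Q = inf bot ?Q" by simp
qed

lemma Fmap_inv:
  assumes ps: "set ps = pieces cs"
    and inv: "\<And>p \<alpha>. p \<in> pieces cs \<Longrightarrow> \<sigma>' p (\<sigma> p \<alpha>) = \<alpha>"
  shows "Fmap ps \<sigma>' (Fmap ps \<sigma> z) = z"
proof
  fix j
  have disj: "\<And>p q. p \<in> set ps \<Longrightarrow> q \<in> set ps \<Longrightarrow> p \<noteq> q \<Longrightarrow> inf p q = bot"
    using pieces_disj ps by blast
  show "Fmap ps \<sigma>' (Fmap ps \<sigma> z) j = z j"
  proof (rule cover_eq[where cs = cs and z = z])
    fix p \<alpha> assume p: "p \<in> pieces cs"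
    let ?Q = "inf p (mt z \<alpha>)"
    let ?y = "Fmap ps \<sigma> z"
    let ?\<beta> = "\<sigma> p \<alpha>"
    have yQ: "inf (?y i) ?Q = inf (cv ?\<beta> i) ?Q" for i
      by (rule Fmap_K) (use p ps disj in auto)
    have mQ: "inf (mt ?y ?\<beta>) ?Q = ?Q" by (rule mt_local_top) (rule yQ)
    have Qp: "inf ?Q p = ?Q" by (simp add: inf_commute inf_left_commute)
    have "inf ?Q (inf p (mt ?y ?\<beta>)) = ?Q"
      using mQ Qp by (metis inf_assoc inf_commute)
    then have "inf (Fmap ps \<sigma>' ?y j) ?Q = inf (cv (\<sigma>' p ?\<beta>) j) ?Q"
      by (rule Fmap_K'[rotated 2]) (use p ps disj in auto)
    also have "\<dots> = inf (cv \<alpha> j) ?Q" using inv p by simp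
    also have "\<dots> = inf (z j) ?Q" by (rule mt_pattern2[symmetric])
    finally show "inf (Fmap ps \<sigma>' ?y j) ?Q = inf (z j) ?Q" .
  qed
qed


lemma glue1: "inf (sup (inf u b) (inf v (-b))) b = inf u (b::'a::boolean_algebra)"
  by (simp add: inf_sup_distrib2 inf_assoc)
lemma glue2: "inf (sup (inf u b) (inf v (-b))) (-b) = inf v (-b::'a::boolean_algebra)"
  by (simp add: inf_sup_distrib2 inf_assoc)

lemma iso_isometry:
  fixes F :: "('n::finite \<Rightarrow> 'a::boolean_algebra) \<Rightarrow> ('n \<Rightarrow> 'a)"
  assumes bfg: "boolean_function g" and W: "W = {x. g x = bot}"
    and bfs: "\<And>j. boolean_function (gs j)" and Fg: "\<And>x j. x \<in> W \<Longrightarrow> F x j = gs j x"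
    and inj: "inj_on F W" and x: "x \<in> W" and y: "y \<in> W"
  shows "bdist (F x) (F y) = bdist x y"
proof -
  have Floc: "inf (F u j) c = inf (F v j) c"
    if "u \<in> W" "v \<in> W" "\<And>i. inf (u i) c = inf (v i) c" for u v j c
    using bf_local[OF bfs, of u c v j] that Fg by simp
  define a where "a = bdist x y"
  define b where "b = bdist (F x) (F y)"
  have "b \<le> a"
  proof -
    have "inf a (-a) = bot" by simp
    then have A1: "\<And>i. inf (x i) (-a) = inf (y i) (-a)" using bdist_inf_bot[of x y "-a"] unfolding a_def by simp
    have "\<And>j. inf (F x j) (-a) = inf (F y j) (-a)" using Floc[OF x y A1] .
    then have "inf b (-a) = bot" using bdist_inf_bot[of "F x" "F y" "-a"] unfolding b_def by simp
    then show ?thesis by (simp only: ba_le_iff)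
  qed
  moreover have "a \<le> b"
  proof -
    define z where "z = (\<lambda>i. sup (inf (x i) b) (inf (y i) (-b)))"
    have zb: "\<And>i. inf (z i) b = inf (x i) b" unfolding z_def by (rule glue1)
    have zb': "\<And>i. inf (z i) (-b) = inf (y i) (-b)" unfolding z_def by (rule glue2)
    have gx: "g x = bot" "g y = bot" using x y W by auto
    have "inf (g z) b = inf (g x) b" by (rule bf_local[OF bfg]) (rule zb)
    moreover have "inf (g z) (-b) = inf (g y) (-b)" by (rule bf_local[OF bfg]) (rule zb')
    ultimately have e1: "inf (g z) b = inf bot b" and e2: "inf (g z) (-b) = inf bot (-b)" using gx by simp_all
    then have "g z = bot" by (rule ba_eq_via)
    then have zW: "z \<in> W" using W by simp
    have "inf b (-b) = bot" by simp
    then have Fxy: "\<And>j. inf (F x j) (-b) = inf (F y j) (-b)" using bdist_inf_bot[of "F x" "F y" "-b"] unfolding b_def by simp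
    have "F z = F x"
    proof
      fix j
      have "inf (F z j) b = inf (F x j) b" using Floc[OF zW x zb] .
      moreover have "inf (F z j) (-b) = inf (F x j) (-b)" using Floc[OF zW y zb'] Fxy by simp
      ultimately show "F z j = F x j" by (rule ba_eq_via)
    qed
    then have "z = x" using inj_onD[OF inj _ zW x] by blast
    then have "\<And>i. inf (x i) (-b) = inf (y i) (-b)" using zb' by simp
    then have "inf a (-b) = bot" using bdist_inf_bot[of x y "-b"] unfolding a_def by simp
    then show ?thesis by (simp only: ba_le_iff)
  qed
  ultimately show ?thesis unfolding a_def b_def by simp
qed

lemma cv_inj_Q: "inf (cv \<alpha> i) Q = inf (cv \<beta> i) Q \<Longrightarrow> Q \<noteq> (bot::'a::boolean_algebra) \<Longrightarrow> \<alpha> i = \<beta> i"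
  unfolding cv_def by (cases "\<alpha> i"; cases "\<beta> i") auto

theorem mainTheorem3:
  fixes W A A' :: "(('n::finite) \<Rightarrow> 'a::boolean_algebra) set"
    and f :: "('n \<Rightarrow> 'a) \<Rightarrow> ('n \<Rightarrow> 'a)"
  assumes "boolean_domain W"
    and "finite A" and "finite A'" and "A \<subseteq> W" and "A' \<subseteq> W"
    and "bij_betw f A A'"
  shows "(\<exists>F. boolean_isomorphism W W F \<and> (\<forall>x\<in>A. F x = f x)) \<longleftrightarrow>
         (\<forall>x\<in>A. \<forall>y\<in>A. bdist (f x) (f y) = bdist x y)"
proof -
  obtain g where bfg: "boolean_function g" and W: "W = {x. g x = bot}"
    using assms(1) unfolding boolean_domain_def by (elim exE conjE)
  show ?thesis
  proof
    assume "\<exists>F. boolean_isomorphism W W F \<and> (\<forall>x\<in>A. F x = f x)"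
    then obtain F where Fi: "boolean_isomorphism W W F" and Ff: "\<forall>x\<in>A. F x = f x" by (elim exE conjE)
    then have bij: "bij_betw F W W" unfolding boolean_isomorphism_def by simp
    obtain gs where bfs: "\<And>j. boolean_function (gs j)" and Fg: "\<And>x j. x \<in> W \<Longrightarrow> F x j = gs j x"
      using Fi unfolding boolean_isomorphism_def boolean_transformation_def by (elim exE conjE) auto
    show "\<forall>x\<in>A. \<forall>y\<in>A. bdist (f x) (f y) = bdist x y"
    proof (intro ballI)
      fix x y assume "x \<in> A" "y \<in> A"
      then have xy: "x \<in> W" "y \<in> W" "F x = f x" "F y = f y" using assms(4) Ff by auto
      have "bdist (F x) (F y) = bdist x y"
        by (rule iso_isometry[OF bfg W bfs Fg bij_betw_imp_inj_on[OF bij] xy(1,2)])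
      then show "bdist (f x) (f y) = bdist x y" using xy by simp
    qed
  next
    assume iso: "\<forall>x\<in>A. \<forall>y\<in>A. bdist (f x) (f y) = bdist x y"
    have fA: "\<And>x. x \<in> A \<Longrightarrow> f x \<in> A'" using assms(6) by (auto simp: bij_betw_def)
    define C where "C = (\<lambda>(x,i). x i) ` ((A \<union> A') \<times> (UNIV::'n set)) \<union> (\<lambda>\<alpha>. g (cv \<alpha>)) ` UNIV"
    have finC: "finite C" unfolding C_def using assms(2,3) by simp
    define cs where "cs = (SOME xs. set xs = C)"
    have cs: "set cs = C" unfolding cs_def by (rule someI_ex) (rule finite_list[OF finC])
    define P where "P = pieces cs"
    define ps where "ps = (SOME xs. set xs = P)"
    have ps: "set ps = pieces cs" unfolding ps_def P_def
      by (rule someI_ex) (rule finite_list[OF pieces_finite])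
    have genA: "x i \<in> set cs" if "x \<in> A \<union> A'" for x i using that cs unfolding C_def by force
    have geng: "g (cv \<alpha>) \<in> set cs" for \<alpha> using cs unfolding C_def by auto
    define D where "D p = {\<alpha>. inf (g (cv \<alpha>)) p = bot}" for p
    have patD: "pat p x \<in> D p" if "p \<in> pieces cs" "x \<in> A \<union> A'" for p x
    proof -
      have "g x = bot" using that assms(4,5) W by auto
      moreover have "inf (g x) p = inf (g (cv (pat p x))) p"
        by (rule bf_local[OF bfg]) (rule piece_pat, use genA that in auto)
      ultimately show ?thesis unfolding D_def by simp
    qed
    have ex: "\<exists>\<tau>. bij \<tau> \<and> (\<forall>\<alpha>. \<tau> \<alpha> \<in> D p \<longleftrightarrow> \<alpha> \<in> D p) \<and> (\<forall>x\<in>A. \<tau> (pat p x) = pat p (f x))"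
      if p: "p \<in> pieces cs" for p
    proof (rule extend_perm[where a = "pat p" and b = "\<lambda>x. pat p (f x)"])
      show "finite (D p)" by simp
      show "\<And>x. x \<in> A \<Longrightarrow> pat p x \<in> D p" using patD p by blast
      show "\<And>x. x \<in> A \<Longrightarrow> pat p (f x) \<in> D p" using patD p fA by blast
      fix x y assume xy: "x \<in> A" "y \<in> A"
      have "pat p x = pat p y \<longleftrightarrow> (\<forall>i. inf (x i) p = inf (y i) p)"
        by (rule pat_eq_iff) (use genA xy p in auto)
      also have "\<dots> \<longleftrightarrow> inf (bdist x y) p = bot" by (simp add: bdist_inf_bot)
      also have "\<dots> \<longleftrightarrow> inf (bdist (f x) (f y)) p = bot" using iso xy by simp
      also have "\<dots> \<longleftrightarrow> (\<forall>i. inf (f x i) p = inf (f y i) p)" by (simp add: bdist_inf_bot)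
      also have "\<dots> \<longleftrightarrow> pat p (f x) = pat p (f y)"
        by (rule pat_eq_iff[symmetric]) (use genA xy p fA in auto)
      finally show "pat p x = pat p y \<longleftrightarrow> pat p (f x) = pat p (f y)" .
    qed
    define \<tau> where "\<tau> p = (SOME \<tau>. bij \<tau> \<and> (\<forall>\<alpha>. \<tau> \<alpha> \<in> D p \<longleftrightarrow> \<alpha> \<in> D p) \<and> (\<forall>x\<in>A. \<tau> (pat p x) = pat p (f x)))" for p
    have \<tau>: "bij (\<tau> p) \<and> (\<forall>\<alpha>. \<tau> p \<alpha> \<in> D p \<longleftrightarrow> \<alpha> \<in> D p) \<and> (\<forall>x\<in>A. \<tau> p (pat p x) = pat p (f x))"
      if "p \<in> pieces cs" for p
      unfolding \<tau>_def by (rule someI_ex[OF ex[OF that]])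
    define \<tau>' where "\<tau>' p = inv (\<tau> p)" for p
    have inv1: "\<tau>' p (\<tau> p \<alpha>) = \<alpha>" if "p \<in> pieces cs" for p \<alpha>
      using \<tau>[OF that] unfolding \<tau>'_def by (simp add: bij_is_inj)
    have inv2: "\<tau> p (\<tau>' p \<alpha>) = \<alpha>" if "p \<in> pieces cs" for p \<alpha>
      using \<tau>[OF that] unfolding \<tau>'_def by (simp add: bij_is_surj surj_f_inv_f)
    define F where "F = Fmap ps \<tau>"
    define G where "G = Fmap ps \<tau>'"
    have FW: "F z \<in> W" if "z \<in> W" for z
    proof -
      have "g (Fmap ps \<tau> z) = bot"
      proof (rule Fmap_W[OF bfg ps geng])
        show "g z = bot" using that W by simp
        fix p \<alpha> assume p: "p \<in> pieces cs" and "inf (g (cv \<alpha>)) p = bot"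
        then have "\<alpha> \<in> D p" unfolding D_def by simp
        then have "\<tau> p \<alpha> \<in> D p" using \<tau>[OF p] by blast
        then show "inf (g (cv (\<tau> p \<alpha>))) p = bot" unfolding D_def by simp
      qed
      then show ?thesis using W F_def by simp
    qed
    have GW: "G z \<in> W" if "z \<in> W" for z
    proof -
      have "g (Fmap ps \<tau>' z) = bot"
      proof (rule Fmap_W[OF bfg ps geng])
        show "g z = bot" using that W by simp
        fix p \<alpha> assume p: "p \<in> pieces cs" and "inf (g (cv \<alpha>)) p = bot"
        then have "\<alpha> \<in> D p" unfolding D_def by simp
        then have "\<tau>' p \<alpha> \<in> D p" using \<tau>[OF p] inv2[OF p, of \<alpha>] by metis
        then show "inf (g (cv (\<tau>' p \<alpha>))) p = bot" unfolding D_def by simp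
      qed
      then show ?thesis using W G_def by simp
    qed
    have GF: "G (F z) = z" for z unfolding F_def G_def by (rule Fmap_inv[where \<sigma>' = \<tau>' and \<sigma> = \<tau>, OF ps inv1])
    have FG: "F (G z) = z" for z unfolding F_def G_def by (rule Fmap_inv[where \<sigma>' = \<tau> and \<sigma> = \<tau>', OF ps inv2])
    have bijF: "bij_betw F W W"
      unfolding bij_betw_def
    proof
      show "inj_on F W" by (metis GF inj_onI)
      show "F ` W = W"
      proof
        show "F ` W \<subseteq> W" using FW by blast
        show "W \<subseteq> F ` W"
        proof
          fix z assume "z \<in> W"
          then show "z \<in> F ` W" using GW FG by (metis image_eqI)
        qed
      qed
    qed
    have btF: "boolean_transformation W W F"
      unfolding boolean_transformation_def
    proof (intro conjI)
      show "\<exists>gs. (\<forall>j. boolean_function (gs j)) \<and> (\<forall>x\<in>W. \<forall>j. F x j = gs j x)"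
        by (rule exI[of _ "\<lambda>j z. F z j"]) (simp add: F_def bf_Fmap)
      show "F ` W \<subseteq> W" using FW by blast
    qed
    have disj: "\<And>p q. p \<in> set ps \<Longrightarrow> q \<in> set ps \<Longrightarrow> p \<noteq> q \<Longrightarrow> inf p q = bot"
      using pieces_disj ps by blast
    have agree: "F x = f x" if x: "x \<in> A" for x
    proof
      fix j
      show "F x j = f x j"
      proof (rule cover_eq[where cs = cs and z = x])
        fix p \<alpha> assume p: "p \<in> pieces cs"
        let ?Q = "inf p (mt x \<alpha>)"
        show "inf (F x j) ?Q = inf (f x j) ?Q"
        proof (cases "?Q = bot")
          case True then show ?thesis by simp
        next
          case False
          have "\<alpha> i = pat p x i" for i
          proof (rule cv_inj_Q[of \<alpha> i "?Q" "pat p x", OF _ False])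
            have "inf (x i) ?Q = inf (cv (pat p x) i) ?Q"
              by (rule inf_p_ext) (rule piece_pat, use genA x p in auto)
            then show "inf (cv \<alpha> i) ?Q = inf (cv (pat p x) i) ?Q" using mt_pattern2[of x i p \<alpha>] by simp
          qed
          then have a: "\<alpha> = pat p x" by auto
          have "inf (F x j) ?Q = inf (cv (\<tau> p \<alpha>) j) ?Q"
            unfolding F_def by (rule Fmap_K) (use p ps disj in auto)
          also have "\<dots> = inf (cv (pat p (f x)) j) ?Q" using \<tau>[OF p] x a by simp
          also have "\<dots> = inf (f x j) ?Q"
            by (rule inf_p_ext, rule sym, rule piece_pat) (use genA x p fA in auto)
          finally show ?thesis .
        qed
      qed
    qed
    show "\<exists>F. boolean_isomorphism W W F \<and> (\<forall>x\<in>A. F x = f x)"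
      using bijF btF agree unfolding boolean_isomorphism_def by blast
  qed
qed

end
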